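(* In the nonatomic base station association game with cost densities $c_{lj}(\mathbf{m})=g_{lj}c(m_j)$, suppose $h_{lj}=h$ for all $l\in\mathcal{L}$, $j\in\mathcal{N}$ (for a constant $h>0$). Then every Nash equilibrium is system optimal, i.e., minimizes $C(\mathbf{m})=\sum_{j\in\mathcal{N}}\sum_{l=1}^L m_{lj}g_{lj}c(m_j)$ over all congestion profiles.
   Context: Nonatomic model: classes $\mathcal{L}=\{1,\dots,L\}$ of nonatomic mobiles, class $l$ having total mass $M_l>0$, target SINR density $\gamma_l>0$ and power gain $h_{lj}>0$ to BS $j\in\mathcal{N}=\{1,\dots,N\}$; noise power $\sigma^2>0$. A congestion profile is $\mathbf{m}=(m_{lj})$ with $m_{lj}\ge0$, $\sum_j m_{lj}=M_l$. Set $m_j=\sum_l\gamma_l m_{lj}$, $g_{lj}=\gamma_l\sigma^2/h_{lj}$, and $c(z)=1/(1-z)$ for $z<1$, $c(z)=\infty$ for $z\ge1$; $c_{lj}(\mathbf{m})=g_{lj}c(m_j)$. $\mathbf{m}$ is a Nash equilibrium if for all $l,j$, $m_{lj}>0$ implies $c_{lj}(\mathbf{m})\le c_{lk}(\mathbf{m})$ for all $k$. Standing feasibility assumption: $\sum_l\gamma_l M_l<N$. *)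

theory Defs
  imports "HOL-Library.Extended_Real"
begin

text \<open>Classes are indexed by {1..L}, base stations by {1..N}.
  A congestion profile is m :: nat => nat => real, m l j = mass of class l at BS j.\<close>

definition profile :: "nat \<Rightarrow> nat \<Rightarrow> (nat \<Rightarrow> real) \<Rightarrow> (nat \<Rightarrow> nat \<Rightarrow> real) \<Rightarrow> bool" where
  "profile L N M m \<longleftrightarrow>
     (\<forall>l\<in>{1..L}. \<forall>j\<in>{1..N}. 0 \<le> m l j) \<and> (\<forall>l\<in>{1..L}. (\<Sum>j\<in>{1..N}. m l j) = M l)"

definition load :: "nat \<Rightarrow> (nat \<Rightarrow> real) \<Rightarrow> (nat \<Rightarrow> nat \<Rightarrow> real) \<Rightarrow> nat \<Rightarrow> real" where
  "load L gamma m j = (\<Sum>l\<in>{1..L}. gamma l * m l j)"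

definition cfun :: "real \<Rightarrow> ereal" where
  "cfun z = (if z < 1 then ereal (1 / (1 - z)) else \<infinity>)"

definition gcoef :: "(nat \<Rightarrow> real) \<Rightarrow> real \<Rightarrow> (nat \<Rightarrow> nat \<Rightarrow> real) \<Rightarrow> nat \<Rightarrow> nat \<Rightarrow> real" where
  "gcoef gamma sigma2 h l j = gamma l * sigma2 / h l j"

definition cost_density ::
  "nat \<Rightarrow> (nat \<Rightarrow> real) \<Rightarrow> real \<Rightarrow> (nat \<Rightarrow> nat \<Rightarrow> real) \<Rightarrow> (nat \<Rightarrow> nat \<Rightarrow> real) \<Rightarrow> nat \<Rightarrow> nat \<Rightarrow> ereal" where
  "cost_density L gamma sigma2 h m l j = ereal (gcoef gamma sigma2 h l j) * cfun (load L gamma m j)"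

definition nash_eq ::
  "nat \<Rightarrow> nat \<Rightarrow> (nat \<Rightarrow> real) \<Rightarrow> (nat \<Rightarrow> real) \<Rightarrow> real \<Rightarrow> (nat \<Rightarrow> nat \<Rightarrow> real) \<Rightarrow> (nat \<Rightarrow> nat \<Rightarrow> real) \<Rightarrow> bool" where
  "nash_eq L N M gamma sigma2 h m \<longleftrightarrow> profile L N M m \<and>
     (\<forall>l\<in>{1..L}. \<forall>j\<in>{1..N}. m l j > 0 \<longrightarrow>
        (\<forall>k\<in>{1..N}. cost_density L gamma sigma2 h m l j \<le> cost_density L gamma sigma2 h m l k))"

text \<open>C(m) = sum_j sum_l m_lj g_lj c(m_j)  (in ereal; 0 * infinity = 0)\<close>
definition total_cost ::
  "nat \<Rightarrow> nat \<Rightarrow> (nat \<Rightarrow> real) \<Rightarrow> real \<Rightarrow> (nat \<Rightarrow> nat \<Rightarrow> real) \<Rightarrow> (nat \<Rightarrow> nat \<Rightarrow> real) \<Rightarrow> ereal" where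
  "total_cost L N gamma sigma2 h m =
     (\<Sum>j\<in>{1..N}. \<Sum>l\<in>{1..L}. ereal (m l j) * cost_density L gamma sigma2 h m l j)"

end

theory Submission
  imports Defs
begin

lemma load_sum:
  assumes "profile L N M m"
  shows "(\<Sum>j\<in>{1..N}. load L gamma m j) = (\<Sum>l\<in>{1..L}. gamma l * M l)"
proof -
  have "(\<Sum>j\<in>{1..N}. load L gamma m j) = (\<Sum>l\<in>{1..L}. \<Sum>j\<in>{1..N}. gamma l * m l j)"
    unfolding load_def by (rule sum.swap)
  also have "\<dots> = (\<Sum>l\<in>{1..L}. gamma l * (\<Sum>j\<in>{1..N}. m l j))"
    by (simp add: sum_distrib_left)
  also have "\<dots> = (\<Sum>l\<in>{1..L}. gamma l * M l)"
    using assms unfolding profile_def by simp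
  finally show ?thesis .
qed

lemma load_nonneg:
  assumes "profile L N M m" "\<forall>l\<in>{1..L}. gamma l > 0" "j \<in> {1..N}"
  shows "0 \<le> load L gamma m j"
  using assms unfolding load_def profile_def
  by (intro sum_nonneg) (simp add: less_imp_le)

lemma cost_finite:
  assumes h_const: "\<forall>l\<in>{1..L}. \<forall>j\<in>{1..N}. h l j = h0"
    and lt: "\<forall>j\<in>{1..N}. load L gamma m j < 1"
  shows "total_cost L N gamma sigma2 h m =
    ereal ((sigma2/h0) * (\<Sum>j\<in>{1..N}. load L gamma m j / (1 - load L gamma m j)))"
proof -
  have inner: "(\<Sum>l\<in>{1..L}. ereal (m l j) * cost_density L gamma sigma2 h m l j)
      = ereal ((sigma2/h0) * (load L gamma m j / (1 - load L gamma m j)))" if j: "j \<in> {1..N}" for j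
  proof -
    let ?x = "load L gamma m j"
    have "(\<Sum>l\<in>{1..L}. ereal (m l j) * cost_density L gamma sigma2 h m l j)
       = (\<Sum>l\<in>{1..L}. ereal (gamma l * m l j * (sigma2/h0/(1 - ?x))))"
    proof (rule sum.cong)
      fix l assume l: "l \<in> {1..L}"
      have "cost_density L gamma sigma2 h m l j = ereal (gamma l * sigma2 / h0 * (1/(1-?x)))"
        using lt j l h_const unfolding cost_density_def gcoef_def cfun_def by simp
      then show "ereal (m l j) * cost_density L gamma sigma2 h m l j =
          ereal (gamma l * m l j * (sigma2/h0/(1 - ?x)))" by simp
    qed simp
    also have "\<dots> = ereal ((\<Sum>l\<in>{1..L}. gamma l * m l j) * (sigma2/h0/(1 - ?x)))"
      by (simp only: sum_distrib_right sum_ereal)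
    also have "\<dots> = ereal ((sigma2/h0) * (?x / (1 - ?x)))"
      unfolding load_def by simp
    finally show ?thesis .
  qed
  have "total_cost L N gamma sigma2 h m =
      (\<Sum>j\<in>{1..N}. ereal ((sigma2/h0) * (load L gamma m j / (1 - load L gamma m j))))"
    unfolding total_cost_def using inner by (rule sum.cong[OF refl])
  also have "\<dots> = ereal ((sigma2/h0) * (\<Sum>j\<in>{1..N}. load L gamma m j / (1 - load L gamma m j)))"
    by (simp add: sum_distrib_left)
  finally show ?thesis .
qed

lemma cost_infinite:
  assumes prof: "profile L N M m" and gamma_pos: "\<forall>l\<in>{1..L}. gamma l > 0"
    and sigma_pos: "sigma2 > 0" and h0_pos: "h0 > 0"
    and h_const: "\<forall>l\<in>{1..L}. \<forall>j\<in>{1..N}. h l j = h0"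
    and j0: "j0 \<in> {1..N}" and ge: "load L gamma m j0 \<ge> 1"
  shows "total_cost L N gamma sigma2 h m = \<infinity>"
proof -
  have "\<exists>l\<in>{1..L}. m l j0 > 0"
  proof (rule ccontr)
    assume "\<not> ?thesis"
    then have "\<forall>l\<in>{1..L}. gamma l * m l j0 \<le> 0"
      using gamma_pos by (auto simp: mult_nonneg_nonpos less_imp_le not_less)
    then have "load L gamma m j0 \<le> 0" unfolding load_def by (intro sum_nonpos) auto
    with ge show False by simp
  qed
  then obtain l0 where l0: "l0 \<in> {1..L}" "m l0 j0 > 0" by blast
  have g: "gamma l0 * sigma2 / h0 > 0" using gamma_pos l0 sigma_pos h0_pos by simp
  have gl0: "gamma l0 > 0" using gamma_pos l0 by auto
  have "cost_density L gamma sigma2 h m l0 j0 = \<infinity>"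
    using gl0 ge h_const l0 j0 sigma_pos h0_pos unfolding cost_density_def gcoef_def cfun_def by simp
  then have "ereal (m l0 j0) * cost_density L gamma sigma2 h m l0 j0 = \<infinity>"
    using l0 by simp
  then have "(\<Sum>l\<in>{1..L}. ereal (m l j0) * cost_density L gamma sigma2 h m l j0) = \<infinity>"
    using l0 by (auto simp: sum_Pinfty)
  then show ?thesis unfolding total_cost_def using j0 by (auto simp: sum_Pinfty)
qed

lemma tangent:
  fixes z mu :: real
  assumes "z < 1" "mu < 1"
  shows "z/(1-z) \<ge> mu/(1-mu) + (z - mu)/(1-mu)^2"
proof -
  define u where "u = 1 - z"
  define v where "v = 1 - mu"
  have u: "u > 0" and v: "v > 0" using assms by (auto simp: u_def v_def)
  have "z/(1-z) = 1/u - 1" using u by (simp add: u_def field_simps)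
  moreover have "mu/(1-mu) + (z - mu)/(1-mu)^2 = (1-v)/v + (v-u)/v^2"
    by (simp add: u_def v_def)
  moreover have "(1-v)/v + (v-u)/v^2 = (2*v - u)/v^2 - 1"
    using v by (simp add: field_simps power2_eq_square)
  moreover have "(2*v - u)/v^2 \<le> 1/u"
  proof -
    have "v^2 - (2*v-u)*u = (v-u)^2" by (simp add: power2_eq_square algebra_simps)
    then have "(2*v - u)*u \<le> v^2" by (metis diff_ge_0_iff_ge zero_le_power2)
    then show ?thesis using u v by (simp add: field_simps)
  qed
  ultimately show ?thesis by linarith
qed

theorem proposition11:
  fixes L N :: nat and M gamma :: "nat \<Rightarrow> real" and sigma2 h0 :: real
    and h m :: "nat \<Rightarrow> nat \<Rightarrow> real"
  assumes M_pos: "\<forall>l\<in>{1..L}. M l > 0"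
    and gamma_pos: "\<forall>l\<in>{1..L}. gamma l > 0"
    and sigma_pos: "sigma2 > 0"
    and h0_pos: "h0 > 0"
    and h_const: "\<forall>l\<in>{1..L}. \<forall>j\<in>{1..N}. h l j = h0"
    and feasible: "(\<Sum>l\<in>{1..L}. gamma l * M l) < real N"
    and NE: "nash_eq L N M gamma sigma2 h m"
  shows "\<forall>m'. profile L N M m' \<longrightarrow>
           total_cost L N gamma sigma2 h m \<le> total_cost L N gamma sigma2 h m'"
proof (intro allI impI)
  fix m' assume prof': "profile L N M m'"
  have prof: "profile L N M m" using NE unfolding nash_eq_def by simp
  define S where "S = (\<Sum>l\<in>{1..L}. gamma l * M l)"
  define ld where "ld = load L gamma m"
  have S_nonneg: "S \<ge> 0" unfolding S_def using gamma_pos M_pos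
    by (intro sum_nonneg) (simp add: less_imp_le)
  have Npos: "N \<ge> 1" using feasible S_nonneg unfolding S_def by (cases N) auto
  have fin: "finite (ld ` {1..N})" "ld ` {1..N} \<noteq> {}" using Npos by auto
  define mu where "mu = Min (ld ` {1..N})"
  obtain k where k: "k \<in> {1..N}" "ld k = mu" using Min_in[OF fin] unfolding mu_def by auto
  have mu_le: "mu \<le> ld j" if "j \<in> {1..N}" for j unfolding mu_def using fin that by simp
  have sumld: "(\<Sum>j\<in>{1..N}. ld j) = S" unfolding ld_def S_def using load_sum[OF prof] .
  have mu_lt: "mu < 1"
  proof (rule ccontr)
    assume "\<not> mu < 1"
    then have "(\<Sum>j\<in>{1..N}. (1::real)) \<le> (\<Sum>j\<in>{1..N}. ld j)"
      using mu_le by (intro sum_mono) force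
    then show False using sumld feasible unfolding S_def by simp
  qed
  have mu_nonneg: "mu \<ge> 0" using k load_nonneg[OF prof gamma_pos] unfolding ld_def by metis
  have all_eq: "ld j = mu" if j: "j \<in> {1..N}" for j
  proof (rule ccontr)
    assume ne: "ld j \<noteq> mu"
    with mu_le[OF j] have gt: "ld j > mu" by simp
    have "\<exists>l\<in>{1..L}. m l j > 0"
    proof (rule ccontr)
      assume "\<not> ?thesis"
      then have "\<forall>l\<in>{1..L}. gamma l * m l j \<le> 0"
        using gamma_pos by (auto simp: mult_nonneg_nonpos less_imp_le not_less)
      then have "ld j \<le> 0" unfolding ld_def load_def by (intro sum_nonpos) auto
      with gt mu_nonneg show False by simp
    qed
    then obtain l where l: "l \<in> {1..L}" "m l j > 0" by blast
    have le: "cost_density L gamma sigma2 h m l j \<le> cost_density L gamma sigma2 h m l k"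
      using NE l j k unfolding nash_eq_def by blast
    have g: "gamma l * sigma2 / h0 > 0" using gamma_pos l sigma_pos h0_pos by simp
    have ck: "cost_density L gamma sigma2 h m l k = ereal (gamma l * sigma2 / h0 * (1/(1-mu)))"
      using k l h_const mu_lt unfolding cost_density_def gcoef_def cfun_def ld_def by simp
    show False
    proof (cases "ld j < 1")
      case True
      have "cost_density L gamma sigma2 h m l j = ereal (gamma l * sigma2 / h0 * (1/(1-ld j)))"
        using True j l h_const unfolding cost_density_def gcoef_def cfun_def ld_def by simp
      with le ck have "gamma l * sigma2 / h0 * (1/(1-ld j)) \<le> gamma l * sigma2 / h0 * (1/(1-mu))"
        by simp
      then have "1/(1-ld j) \<le> 1/(1-mu)" using g by (metis mult_le_cancel_left_pos)
      then show False using True mu_lt gt by (simp add: divide_le_eq_1 field_simps)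
    next
      case False
      have gl: "gamma l > 0" using gamma_pos l by auto
      have "cost_density L gamma sigma2 h m l j = \<infinity>"
        using gl sigma_pos h0_pos False g j l h_const unfolding cost_density_def gcoef_def cfun_def ld_def by simp
      with le ck show False by simp
    qed
  qed
  have Smu: "S = real N * mu" using sumld all_eq by simp
  have costm: "total_cost L N gamma sigma2 h m = ereal ((sigma2/h0) * (real N * (mu/(1-mu))))"
    using cost_finite[OF h_const, of gamma m sigma2] all_eq mu_lt unfolding ld_def by simp
  show "total_cost L N gamma sigma2 h m \<le> total_cost L N gamma sigma2 h m'"
  proof (cases "\<forall>j\<in>{1..N}. load L gamma m' j < 1")
    case False
    then obtain j0 where "j0 \<in> {1..N}" "load L gamma m' j0 \<ge> 1" by (auto simp: not_less)
    then have "total_cost L N gamma sigma2 h m' = \<infinity>"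
      using cost_infinite[OF prof' gamma_pos sigma_pos h0_pos h_const] by blast
    then show ?thesis by simp
  next
    case True
    define l' where "l' = load L gamma m'"
    have c': "total_cost L N gamma sigma2 h m' =
        ereal ((sigma2/h0) * (\<Sum>j\<in>{1..N}. l' j / (1 - l' j)))"
      using cost_finite[OF h_const True] unfolding l'_def .
    have "(\<Sum>j\<in>{1..N}. mu/(1-mu) + (l' j - mu)/(1-mu)^2) \<le> (\<Sum>j\<in>{1..N}. l' j / (1 - l' j))"
      using True mu_lt tangent unfolding l'_def by (intro sum_mono) auto
    moreover have "(\<Sum>j\<in>{1..N}. mu/(1-mu) + (l' j - mu)/(1-mu)^2)
        = real N * (mu/(1-mu)) + ((\<Sum>j\<in>{1..N}. l' j) - real N * mu)/(1-mu)^2"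
      by (simp add: sum.distrib sum_divide_distrib[symmetric] sum_subtractf)
    moreover have "(\<Sum>j\<in>{1..N}. l' j) = S" unfolding l'_def S_def using load_sum[OF prof'] .
    ultimately have "real N * (mu/(1-mu)) \<le> (\<Sum>j\<in>{1..N}. l' j / (1 - l' j))"
      using Smu by simp
    then have "(sigma2/h0) * (real N * (mu/(1-mu))) \<le> (sigma2/h0) * (\<Sum>j\<in>{1..N}. l' j / (1 - l' j))"
      using sigma_pos h0_pos by (intro mult_left_mono) auto
    then show ?thesis using costm c' by simp
  qed
qed

end
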